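(* Let $\alpha,\beta\ge-\tfrac12$, let $w_{\alpha\beta}(x)=(1-x)^\alpha(1+x)^\beta$ on $[-1,1]$ and let $\{p_l\}_{l\ge0}$ be the orthonormal Jacobi polynomials for $\langle f,g\rangle=\int_{-1}^1 f\bar g\,w_{\alpha\beta}\,dx$ (positive leading coefficients). Let $0\le m\le n$ be integers and $\mathcal{R}(x)=p_m(x)+\sum_{l=0}^{m-1}e_lp_l(x)$, $e_l\in\mathbb{C}$. Let $\lambda_1=\frac{\beta-\alpha}{2+\alpha+\beta}$ and define $\mathcal{L}_n=\{P\in\mathbb{S}_n:\varepsilon(P)>\lambda_1\}$, $\mathcal{L}_n^m=\{P\in\mathbb{S}_n^m:\varepsilon(P)>\lambda_1\}$, $\mathcal{L}_n^{\mathcal{R}}=\{P\in\mathbb{S}_n^{\mathcal{R}}:\varepsilon(P)>\lambda_1\}$. If these sets are nonempty, then the set of minimizers of $\operatorname{var}_S$ over $\mathcal{L}_n$ equals the set of maximizers of $\varepsilon$ over $\mathcal{L}_n$, which is the set of maximizers $\mathcal{P}_n$ of $\varepsilon$ over $\mathbb{S}_n$; likewise the minimizers of $\operatorname{var}_S$ over $\mathcal{L}^m_n$ equal the maximizers of $\varepsilon$ over $\mathcal{L}^m_n$, namely $\mathcal{P}^m_n$, and the minimizers of $\operatorname{var}_S$ over $\mathcal{L}^{\mathcal{R}}_n$ equal the maximizers of $\varepsilon$ over $\mathcal{L}^{\mathcal{R}}_n$, namely $\mathcal{P}^{\mathcal{R}}_n$. In particular, among all polynomials in $\mathcal{L}_n$,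 $\mathcal{L}_n^m$, $\mathcal{L}_n^{\mathcal{R}}$, the polynomials $\mathcal{P}_n$, $\mathcal{P}_n^m$, $\mathcal{P}_n^{\mathcal{R}}$ respectively minimize the position variance.
   Context: $\varepsilon(f)=\int_{-1}^1x|f(x)|^2w_{\alpha\beta}(x)\,dx$ and $\|f\|^2=\int_{-1}^1|f|^2w_{\alpha\beta}dx$. Position variance: $\operatorname{var}_S(f)=\dfrac{1-\varepsilon(f)^2}{\big(\frac{\alpha-\beta}{\alpha+\beta+2}+\varepsilon(f)\big)^2}$ (defined when the denominator is nonzero). $\Pi_n=\operatorname{span}\{p_0,\dots,p_n\}$, $\Pi^m_n=\operatorname{span}\{p_m,\dots,p_n\}$, $\Pi^{\mathcal{R}}_n=\{c_m\mathcal{R}+\sum_{l=m+1}^nc_lp_l\}$ (complex coefficients), and $\mathbb{S}_n,\mathbb{S}^m_n,\mathbb{S}^{\mathcal{R}}_n$ are their subsets of norm-one elements. $\mathcal{P}_n$, $\mathcal{P}^m_n$, $\mathcal{P}^{\mathcal{R}}_n$ denote the maximizers of $\varepsilon$ over $\mathbb{S}_n$, $\mathbb{S}^m_n$, $\mathbb{S}^{\mathcal{R}}_n$ respectively (each unique up to multiplication by a complex scalar of modulus one). *)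

theory Defs
  imports "HOL-Analysis.Analysis" "HOL-Computational_Algebra.Polynomial"
begin

definition jw :: "real \<Rightarrow> real \<Rightarrow> real \<Rightarrow> real" where
  "jw \<alpha> \<beta> x = (1 - x) powr \<alpha> * (1 + x) powr \<beta>"

text \<open>Weighted L2 inner product of real polynomials (Jacobi polynomials are real).\<close>
definition jinner :: "real \<Rightarrow> real \<Rightarrow> real poly \<Rightarrow> real poly \<Rightarrow> real" where
  "jinner \<alpha> \<beta> f g = integral {-1..1} (\<lambda>x. poly f x * poly g x * jw \<alpha> \<beta> x)"

definition orthonormal_jacobi :: "real \<Rightarrow> real \<Rightarrow> (nat \<Rightarrow> real poly) \<Rightarrow> bool" where
  "orthonormal_jacobi \<alpha> \<beta> p \<longleftrightarrow>
     (\<forall>l. degree (p l) = l \<and> lead_coeff (p l) > 0) \<and>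
     (\<forall>k l. jinner \<alpha> \<beta> (p k) (p l) = (if k = l then 1 else 0))"

definition nrm2 :: "real \<Rightarrow> real \<Rightarrow> (real \<Rightarrow> complex) \<Rightarrow> real" where
  "nrm2 \<alpha> \<beta> f = integral {-1..1} (\<lambda>x. (cmod (f x))\<^sup>2 * jw \<alpha> \<beta> x)"

definition eps :: "real \<Rightarrow> real \<Rightarrow> (real \<Rightarrow> complex) \<Rightarrow> real" where
  "eps \<alpha> \<beta> f = integral {-1..1} (\<lambda>x. x * (cmod (f x))\<^sup>2 * jw \<alpha> \<beta> x)"

definition varS :: "real \<Rightarrow> real \<Rightarrow> (real \<Rightarrow> complex) \<Rightarrow> real" where
  "varS \<alpha> \<beta> f = (1 - (eps \<alpha> \<beta> f)\<^sup>2) / ((\<alpha> - \<beta>) / (\<alpha> + \<beta> + 2) + eps \<alpha> \<beta> f)\<^sup>2"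

definition pc :: "(nat \<Rightarrow> real poly) \<Rightarrow> nat \<Rightarrow> real \<Rightarrow> complex" where
  "pc p l x = complex_of_real (poly (p l) x)"

definition Pi_n :: "(nat \<Rightarrow> real poly) \<Rightarrow> nat \<Rightarrow> (real \<Rightarrow> complex) set" where
  "Pi_n p n = {f. \<exists>c :: nat \<Rightarrow> complex. f = (\<lambda>x. \<Sum>l\<le>n. c l * pc p l x)}"

definition Pi_mn :: "(nat \<Rightarrow> real poly) \<Rightarrow> nat \<Rightarrow> nat \<Rightarrow> (real \<Rightarrow> complex) set" where
  "Pi_mn p m n = {f. \<exists>c :: nat \<Rightarrow> complex. f = (\<lambda>x. \<Sum>l\<in>{m..n}. c l * pc p l x)}"

definition Rpoly :: "(nat \<Rightarrow> real poly) \<Rightarrow> nat \<Rightarrow> (nat \<Rightarrow> complex) \<Rightarrow> real \<Rightarrow> complex" where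
  "Rpoly p m e x = pc p m x + (\<Sum>l<m. e l * pc p l x)"

definition Pi_R :: "(nat \<Rightarrow> real poly) \<Rightarrow> nat \<Rightarrow> (nat \<Rightarrow> complex) \<Rightarrow> nat \<Rightarrow> (real \<Rightarrow> complex) set" where
  "Pi_R p m e n = {f. \<exists>c :: nat \<Rightarrow> complex.
      f = (\<lambda>x. c m * Rpoly p m e x + (\<Sum>l\<in>{m+1..n}. c l * pc p l x))}"

definition unitS :: "real \<Rightarrow> real \<Rightarrow> (real \<Rightarrow> complex) set \<Rightarrow> (real \<Rightarrow> complex) set" where
  "unitS \<alpha> \<beta> A = {f \<in> A. nrm2 \<alpha> \<beta> f = 1}"

definition Lset :: "real \<Rightarrow> real \<Rightarrow> (real \<Rightarrow> complex) set \<Rightarrow> (real \<Rightarrow> complex) set" where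
  "Lset \<alpha> \<beta> S = {f \<in> S. eps \<alpha> \<beta> f > (\<beta> - \<alpha>) / (2 + \<alpha> + \<beta>)}"

definition maximizers :: "('a \<Rightarrow> real) \<Rightarrow> 'a set \<Rightarrow> 'a set" where
  "maximizers F A = {f \<in> A. \<forall>g \<in> A. F g \<le> F f}"

definition minimizers :: "('a \<Rightarrow> real) \<Rightarrow> 'a set \<Rightarrow> 'a set" where
  "minimizers F A = {f \<in> A. \<forall>g \<in> A. F f \<le> F g}"

end

theory Submission
  imports Defs
begin


lemma eps_bound:
  assumes "nrm2 a b f = 1"
  shows "\<bar>eps a b f\<bar> \<le> 1"
proof -
  let ?h = "\<lambda>x. (cmod (f x))\<^sup>2 * jw a b x"
  have int: "?h integrable_on {-1..1}"
    using assms unfolding nrm2_def by (metis not_integrable_integral zero_neq_one)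
  have hm: "?h \<in> borel_measurable (lebesgue_on {-1..1})"
    using int by (rule integrable_imp_measurable)
  have xm: "(\<lambda>x::real. x) \<in> borel_measurable (lebesgue_on {-1..1})" by (rule continuous_imp_measurable_on_sets_lebesgue) (auto intro: continuous_intros)
  have m: "(\<lambda>x. x * (cmod (f x))\<^sup>2 * jw a b x) \<in> borel_measurable (lebesgue_on {-1..1})"
    using borel_measurable_times[OF xm hm] by (simp add: mult.assoc)
  have hi: "(?h has_integral 1) {-1..1}"
    using int assms unfolding nrm2_def by (simp add: has_integral_integral)
  have "norm (eps a b f) \<le> 1"
    unfolding eps_def
  proof (rule integral_norm_bound_integral'[OF _ m _ hi])
    fix x :: real assume x: "x \<in> {-1..1}"
    have "jw a b x \<ge> 0" unfolding jw_def by simp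
    moreover have "\<bar>x\<bar> \<le> 1" using x by auto
    ultimately show "norm (x * (cmod (f x))\<^sup>2 * jw a b x) \<le> ?h x"
      by (simp add: abs_mult mult_left_le_one_le mult.assoc)
  qed simp
  then show ?thesis by simp
qed


lemma aux: "(u::real) \<noteq> 0 \<Longrightarrow> A * (1/u)\<^sup>2 - 2*l*(1/u) - 1 = (A - 2*l*u - u\<^sup>2) / u\<^sup>2"
  by (simp add: field_simps power2_eq_square)

lemma mono_g:
  fixes l e1 e2 :: real
  assumes "-1 < l" "l < 1" "l < e1" "e1 < e2" "e2 \<le> 1"
  shows "(1 - e2\<^sup>2) / (e2 - l)\<^sup>2 < (1 - e1\<^sup>2) / (e1 - l)\<^sup>2"
proof -
  define t1 where "t1 = 1/(e1 - l)"
  define t2 where "t2 = 1/(e2 - l)"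
  have g: "(1 - e\<^sup>2) / (e - l)\<^sup>2 = (1 - l\<^sup>2) * (1/(e-l))\<^sup>2 - 2*l*(1/(e-l)) - 1" if "e > l" for e
  proof -
    have u: "e - l \<noteq> 0" using that by simp
    have "(1 - l\<^sup>2) * (1/(e-l))\<^sup>2 - 2*l*(1/(e-l)) - 1 = ((1 - l\<^sup>2) - 2*l*(e-l) - (e-l)\<^sup>2) / (e-l)\<^sup>2"
      using u by (metis aux)
    also have "(1 - l\<^sup>2) - 2*l*(e-l) - (e-l)\<^sup>2 = 1 - e\<^sup>2" by (simp add: algebra_simps power2_eq_square)
    finally show ?thesis by simp
  qed
  have t21: "t2 < t1" unfolding t1_def t2_def using assms by (simp add: divide_strict_left_mono)
  have t2b: "t2 \<ge> 1/(1-l)" unfolding t2_def using assms by (simp add: frac_le)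
  have "1/(1-l) > 0" using assms by simp
  have key: "(1 - l\<^sup>2) * t2\<^sup>2 - 2*l*t2 < (1 - l\<^sup>2) * t1\<^sup>2 - 2*l*t1"
  proof -
    have "(1 - l\<^sup>2) * t1\<^sup>2 - 2*l*t1 - ((1 - l\<^sup>2) * t2\<^sup>2 - 2*l*t2) = (t1 - t2) * ((1-l\<^sup>2)*(t1+t2) - 2*l)"
      by (simp add: algebra_simps power2_eq_square)
    moreover have "(1-l\<^sup>2)*(t1+t2) - 2*l > 0"
    proof -
      have "1 - l\<^sup>2 > 0" using assms by (simp add: abs_square_less_1)
      have "t1 + t2 > 2/(1-l)" using t21 t2b by simp
      hence "(1-l\<^sup>2)*(t1+t2) > (1-l\<^sup>2)*(2/(1-l))" using \<open>1 - l\<^sup>2 > 0\<close> by (rule mult_strict_left_mono)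
      also have "(1-l\<^sup>2)*(2/(1-l)) = 2*(1+l)" using assms by (simp add: field_simps power2_eq_square)
      finally show ?thesis by simp
    qed
    ultimately show ?thesis using t21 by (smt (verit) mult_pos_pos)
  qed
  show ?thesis using g[of e1] g[of e2] assms key unfolding t1_def t2_def by simp
qed

lemma generic:
  fixes a b :: real and S :: "(real \<Rightarrow> complex) set"
  assumes "a \<ge> -1/2" "b \<ge> -1/2" and S: "S \<subseteq> {f. nrm2 a b f = 1}"
  shows "Lset a b S \<noteq> {} \<longrightarrow>
       minimizers (varS a b) (Lset a b S) = maximizers (eps a b) (Lset a b S) \<and>
       maximizers (eps a b) (Lset a b S) = maximizers (eps a b) S"
proof
  assume ne: "Lset a b S \<noteq> {}"
  define l where "l = (b - a) / (2 + a + b)"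
  have den: "2 + a + b > 0" using assms by simp
  have l1: "-1 < l" "l < 1" unfolding l_def using den assms by (simp_all add: field_simps)
  have V: "varS a b f = (1 - (eps a b f)\<^sup>2) / (eps a b f - l)\<^sup>2" for f
  proof -
    have "(a - b) / (a + b + 2) + eps a b f = eps a b f - l"
      unfolding l_def using den by (simp add: field_simps)
    then show ?thesis unfolding varS_def by simp
  qed
  have L: "Lset a b S = {f \<in> S. eps a b f > l}" unfolding Lset_def l_def by simp
  have E1: "eps a b f \<le> 1" if "f \<in> S" for f using eps_bound[of a b f] S that by auto
  have strict: "varS a b g < varS a b f" if "f \<in> Lset a b S" "g \<in> Lset a b S" "eps a b f < eps a b g" for f g
    using mono_g[OF l1, of "eps a b f" "eps a b g"] that E1 unfolding V L by auto
  have part1: "minimizers (varS a b) (Lset a b S) = maximizers (eps a b) (Lset a b S)"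
  proof (intro equalityI subsetI)
    fix f assume f: "f \<in> minimizers (varS a b) (Lset a b S)"
    show "f \<in> maximizers (eps a b) (Lset a b S)"
      unfolding maximizers_def
    proof (intro CollectI conjI ballI)
      show fL: "f \<in> Lset a b S" using f unfolding minimizers_def by auto
      fix g assume g: "g \<in> Lset a b S"
      show "eps a b g \<le> eps a b f"
      proof (rule ccontr)
        assume "\<not> ?thesis"
        hence "varS a b g < varS a b f" using strict[OF fL g] by simp
        thus False using f g unfolding minimizers_def by force
      qed
    qed
  next
    fix f assume f: "f \<in> maximizers (eps a b) (Lset a b S)"
    show "f \<in> minimizers (varS a b) (Lset a b S)"
      unfolding minimizers_def
    proof (intro CollectI conjI ballI)
      show fL: "f \<in> Lset a b S" using f unfolding maximizers_def by auto
      fix g assume g: "g \<in> Lset a b S"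
      have "eps a b g \<le> eps a b f" using f g unfolding maximizers_def by auto
      then consider "eps a b g = eps a b f" | "eps a b g < eps a b f" by linarith
      then show "varS a b f \<le> varS a b g"
      proof cases
        case 1 then show ?thesis unfolding V by simp
      next
        case 2 then show ?thesis using strict[OF g fL] by simp
      qed
    qed
  qed
  have part2: "maximizers (eps a b) (Lset a b S) = maximizers (eps a b) S"
  proof (intro equalityI subsetI)
    fix f assume f: "f \<in> maximizers (eps a b) (Lset a b S)"
    hence fL: "f \<in> S" "eps a b f > l" unfolding maximizers_def L by auto
    show "f \<in> maximizers (eps a b) S" unfolding maximizers_def
    proof (intro CollectI conjI ballI)
      show "f \<in> S" by fact
      fix g assume g: "g \<in> S"
      show "eps a b g \<le> eps a b f"
      proof (cases "eps a b g > l")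
        case True then show ?thesis using f g unfolding maximizers_def L by auto
      next
        case False then show ?thesis using fL by simp
      qed
    qed
  next
    fix f assume f: "f \<in> maximizers (eps a b) S"
    obtain g where g: "g \<in> Lset a b S" using ne by auto
    have "eps a b f > l" using f g unfolding maximizers_def L by force
    then show "f \<in> maximizers (eps a b) (Lset a b S)" using f unfolding maximizers_def L by auto
  qed
  show "minimizers (varS a b) (Lset a b S) = maximizers (eps a b) (Lset a b S) \<and>
       maximizers (eps a b) (Lset a b S) = maximizers (eps a b) S" using part1 part2 by simp
qed


theorem theorem4p3:
  fixes \<alpha> \<beta> :: real and p :: "nat \<Rightarrow> real poly" and m n :: nat and e :: "nat \<Rightarrow> complex"
  assumes "\<alpha> \<ge> -1/2" and "\<beta> \<ge> -1/2"
    and "orthonormal_jacobi \<alpha> \<beta> p"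
    and "m \<le> n"
  shows
   "(Lset \<alpha> \<beta> (unitS \<alpha> \<beta> (Pi_n p n)) \<noteq> {} \<longrightarrow>
       minimizers (varS \<alpha> \<beta>) (Lset \<alpha> \<beta> (unitS \<alpha> \<beta> (Pi_n p n)))
         = maximizers (eps \<alpha> \<beta>) (Lset \<alpha> \<beta> (unitS \<alpha> \<beta> (Pi_n p n))) \<and>
       maximizers (eps \<alpha> \<beta>) (Lset \<alpha> \<beta> (unitS \<alpha> \<beta> (Pi_n p n)))
         = maximizers (eps \<alpha> \<beta>) (unitS \<alpha> \<beta> (Pi_n p n))) \<and>
    (Lset \<alpha> \<beta> (unitS \<alpha> \<beta> (Pi_mn p m n)) \<noteq> {} \<longrightarrow>
       minimizers (varS \<alpha> \<beta>) (Lset \<alpha> \<beta> (unitS \<alpha> \<beta> (Pi_mn p m n)))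
         = maximizers (eps \<alpha> \<beta>) (Lset \<alpha> \<beta> (unitS \<alpha> \<beta> (Pi_mn p m n))) \<and>
       maximizers (eps \<alpha> \<beta>) (Lset \<alpha> \<beta> (unitS \<alpha> \<beta> (Pi_mn p m n)))
         = maximizers (eps \<alpha> \<beta>) (unitS \<alpha> \<beta> (Pi_mn p m n))) \<and>
    (Lset \<alpha> \<beta> (unitS \<alpha> \<beta> (Pi_R p m e n)) \<noteq> {} \<longrightarrow>
       minimizers (varS \<alpha> \<beta>) (Lset \<alpha> \<beta> (unitS \<alpha> \<beta> (Pi_R p m e n)))
         = maximizers (eps \<alpha> \<beta>) (Lset \<alpha> \<beta> (unitS \<alpha> \<beta> (Pi_R p m e n))) \<and>
       maximizers (eps \<alpha> \<beta>) (Lset \<alpha> \<beta> (unitS \<alpha> \<beta> (Pi_R p m e n)))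
         = maximizers (eps \<alpha> \<beta>) (unitS \<alpha> \<beta> (Pi_R p m e n)))"
  proof -
  have s: "unitS \<alpha> \<beta> A \<subseteq> {f. nrm2 \<alpha> \<beta> f = 1}" for A unfolding unitS_def by auto
  show ?thesis using generic[OF assms(1,2) s] by blast
qed

end
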